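(* Let $c\ge0$, $\gamma\ge0$, $\sigma^2>0$ and $\alpha\in(0,1]$. Then the function $$f(x)=\frac{c+\gamma\sigma^{2\alpha}\left(2^{x}-1\right)^{\alpha}}{x}$$ is convex on $(0,\infty)$. In particular this holds with $c=P_0-P_{\mathrm{sleep}}$ whenever $P_0\ge P_{\mathrm{sleep}}$.
   Context: $P_0\ge0$ is the load-independent active power consumption and $P_{\mathrm{sleep}}$ a constant sleep power consumption. *)

theory Defs
  imports "HOL-Analysis.Analysis"
begin

end

theory Submission
  imports Defs
begin

lemma key_ineq:
  fixes y :: real assumes "y \<ge> 0"
  shows "y * exp (y/2) \<le> exp y - 1"
proof -
  let ?m = "\<lambda>y::real. exp y - 1 - y * exp (y/2)"
  have "?m 0 \<le> ?m y"
  proof (rule DERIV_nonneg_imp_increasing_open[OF assms])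
    fix x :: real assume x: "0 < x" "x < y"
    have d: "DERIV ?m x :> (exp x - exp (x/2) - x * (exp (x/2) / 2))"
      by (auto intro!: derivative_eq_intros)
    have e: "exp x = exp (x/2) * exp (x/2)" by (simp flip: exp_add)
    have "1 + x/2 \<le> exp (x/2)" by (rule exp_ge_add_one_self)
    then have "0 \<le> exp (x/2) - 1 - x/2" by linarith
    then have "0 \<le> exp (x/2) * (exp (x/2) - 1 - x/2)" by (intro mult_nonneg_nonneg) auto
    then have "exp x - exp (x/2) - x * (exp (x/2) / 2) \<ge> 0"
      using e by (simp add: algebra_simps)
    then show "\<exists>d. DERIV ?m x :> d \<and> d \<ge> 0" using d by blast
  next
    show "continuous_on {0..y} ?m" by (intro continuous_intros) auto
  qed
  then show ?thesis by simp
qed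

lemma key_sq:
  fixes y :: real assumes "y \<ge> 0"
  shows "y^2 * exp y \<le> (exp y - 1)^2"
proof -
  have a: "0 \<le> y * exp (y/2)" using assms by simp
  have "(y * exp (y/2))^2 \<le> (exp y - 1)^2"
    using power_mono[OF key_ineq[OF assms] a] by simp
  moreover have "(y * exp (y/2))^2 = y^2 * exp y"
    by (simp add: power_mult_distrib power2_eq_square flip: exp_add)
  ultimately show ?thesis by simp
qed

lemma psi_convex:
  fixes \<alpha> L :: real assumes "0 \<le> \<alpha>" "\<alpha> \<le> 1" "L > 0"
  shows "convex_on {0<..} (\<lambda>x. \<alpha> * ln (exp (x*L) - 1) - ln x)"
proof (rule f''_ge0_imp_convex)
  show "convex {0::real<..}" by simp
next
  fix x :: real assume "x \<in> {0<..}"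
  then have x: "x > 0" by simp
  have p: "exp (x*L) - 1 > 0" using x assms by simp
  show "DERIV (\<lambda>x. \<alpha> * ln (exp (x*L) - 1) - ln x) x :>
          (\<alpha> * (exp (x*L) * L) / (exp (x*L) - 1) - 1 / x)"
    using p x by (auto intro!: derivative_eq_intros simp: field_simps)
  show "DERIV (\<lambda>x. \<alpha> * (exp (x*L) * L) / (exp (x*L) - 1) - 1 / x) x :>
          (1 / x^2 - \<alpha> * L^2 * exp (x*L) / (exp (x*L) - 1)^2)"
    using p x by (auto intro!: derivative_eq_intros simp: field_simps power2_eq_square)
  have k: "(x*L)^2 * exp (x*L) \<le> (exp (x*L) - 1)^2"
    using key_sq[of "x*L"] x assms by simp
  have "\<alpha> * ((x*L)^2 * exp (x*L)) \<le> 1 * (exp (x*L) - 1)^2"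
    using k assms by (intro mult_mono) auto
  then have "\<alpha> * L^2 * exp (x*L) * x^2 \<le> (exp (x*L) - 1)^2"
    by (simp add: power_mult_distrib algebra_simps)
  then have "\<alpha> * L^2 * exp (x*L) \<le> (exp (x*L) - 1)^2 / x^2"
    using x by (simp add: le_divide_eq)
  then have "\<alpha> * L^2 * exp (x*L) / (exp (x*L) - 1)^2 \<le> 1 / x^2"
    using p by (simp add: divide_le_eq)
  then show "0 \<le> 1 / x^2 - \<alpha> * L^2 * exp (x*L) / (exp (x*L) - 1)^2"
    by simp
qed

lemma my_convex_on_cong:
  fixes f g :: "real \<Rightarrow> real"
  assumes "convex_on S f" "\<And>x. x \<in> S \<Longrightarrow> f x = g x"
  shows "convex_on S g"
proof -
  have c: "convex S" using assms(1) by (simp add: convex_on_def)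
  show ?thesis unfolding convex_on_def
  proof (intro conjI c ballI allI impI)
    fix x y u v :: real assume xy: "x \<in> S" "y \<in> S" and uv: "0 \<le> u" "0 \<le> v" "u + v = 1"
    have "u *\<^sub>R x + v *\<^sub>R y \<in> S" using convexD[OF c xy uv] by simp
    then show "g (u *\<^sub>R x + v *\<^sub>R y) \<le> u * g x + v * g y"
      using assms xy uv unfolding convex_on_def by (metis (no_types))
  qed
qed

lemma exp_compose_convex:
  assumes "convex_on S (f :: real \<Rightarrow> real)"
  shows "convex_on S (\<lambda>x. exp (f x))"
proof -
  have c: "convex S" using assms by (simp add: convex_on_def)
  show ?thesis unfolding convex_on_def
  proof (intro conjI c ballI allI impI)
    fix x y u v :: real assume xy: "x \<in> S" "y \<in> S" and uv: "0 \<le> u" "0 \<le> v" "u + v = 1"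
    have "f (u *\<^sub>R x + v *\<^sub>R y) \<le> u * f x + v * f y"
      using assms xy uv unfolding convex_on_def by blast
    then have "exp (f (u *\<^sub>R x + v *\<^sub>R y)) \<le> exp (u * f x + v * f y)" by simp
    also have "\<dots> \<le> u * exp (f x) + v * exp (f y)"
      using exp_convex uv unfolding convex_on_def by auto
    finally show "exp (f (u *\<^sub>R x + v *\<^sub>R y)) \<le> u * exp (f x) + v * exp (f y)" .
  qed
qed

theorem lemma4:
  fixes c \<gamma> \<sigma> \<alpha> :: real
  assumes "c \<ge> 0" and "\<gamma> \<ge> 0" and "\<sigma>\<^sup>2 > 0"
    and "0 < \<alpha>" and "\<alpha> \<le> 1"
  shows "convex_on {0<..}
           (\<lambda>x::real. (c + \<gamma> * (\<sigma>\<^sup>2) powr \<alpha> * (2 powr x - 1) powr \<alpha>) / x)"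
proof -
  define L :: real where "L = ln 2"
  define K where "K = \<gamma> * (\<sigma>\<^sup>2) powr \<alpha>"
  have L: "L > 0" unfolding L_def by simp
  have K: "K \<ge> 0" unfolding K_def using assms by simp
  have c1: "convex_on {0<..} (\<lambda>x::real. c * inverse x)"
    using assms(1) by (intro convex_on_cmul convex_on_inverse) auto
  have c2: "convex_on {0<..} (\<lambda>x. K * exp (\<alpha> * ln (exp (x*L) - 1) - ln x))"
    using K assms L by (intro convex_on_cmul exp_compose_convex psi_convex) auto
  have c3: "convex_on {0<..} (\<lambda>x. c * inverse x + K * exp (\<alpha> * ln (exp (x*L) - 1) - ln x))"
    using c1 c2 by (rule convex_on_add)
  show ?thesis
  proof (rule my_convex_on_cong[OF c3])
    fix x :: real assume "x \<in> {0<..}"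
    then have x: "x > 0" by simp
    have xl: "x*L > 0" using x L by simp
    have p: "exp (x*L) - 1 > 0" using xl by simp
    have e: "2 powr x = exp (x*L)" unfolding L_def by (simp add: powr_def)
    have "exp (\<alpha> * ln (exp (x*L) - 1) - ln x) = exp (\<alpha> * ln (exp (x*L) - 1)) / x"
      using x L by (simp add: exp_diff)
    also have "\<dots> = (exp (x*L) - 1) powr \<alpha> / x"
      using p by (metis order_less_irrefl powr_def)
    finally have g: "exp (\<alpha> * ln (exp (x*L) - 1) - ln x) = (2 powr x - 1) powr \<alpha> / x"
      using e by simp
    show "c * inverse x + K * exp (\<alpha> * ln (exp (x*L) - 1) - ln x)
          = (c + \<gamma> * (\<sigma>\<^sup>2) powr \<alpha> * (2 powr x - 1) powr \<alpha>) / x"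
      unfolding g K_def by (simp add: divide_inverse algebra_simps)
  qed
qed

end
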